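(* Let $(\phi,y)$ be feasible and satisfy the modified condition (MC). Let $(\phi^\dagger,y^\dagger)$ be feasible such that either $\phi^\dagger\ge\phi$ coordinatewise or $\phi^\dagger\le\phi$ coordinatewise. Then $T(\phi,y)\le T(\phi^\dagger,y^\dagger)$, where $T(\phi,y)=\sum_{(i,j)\in\mathcal E}D_{ij}(F_{ij})+\sum_{i}B_i(Y_i)$.
   Context: Network model. $\mathcal G=(\mathcal V,\mathcal E)$ is a finite directed graph with $(j,i)\in\mathcal E$ whenever $(i,j)\in\mathcal E$; $\mathcal N(i)=\{j:(i,j)\in\mathcal E\}$. $\mathcal C$ is a finite catalog; item $k$ has nonempty designated server set $\mathcal S_k\subseteq\mathcal V$. Exogenous request rates $r_i(k)\ge0$. Variables: $\phi_{ij}(k)\in[0,1]$ with $\phi_{ij}(k)=0$ if $(i,j)\notin\mathcal E$, and $y_i(k)\in[0,1]$. Flow conservation: $y_i(k)+\sum_{j}\phi_{ij}(k)=1$ if $i\notin\mathcal S_k$ and $=0$ if $i\in\mathcal S_k$. A pair $(\phi,y)$ is feasible if it satisfies these constraints and the arrival rates $t_i(k)$, solving $t_i(k)=r_i(k)+\sum_j t_j(k)\phi_{ji}(k)$, are uniquely determined and nonnegative (e.g. when for each $k$ the graph with edges $\{(i,j):\phi_{ij}(k)>0\}$ is acyclic). $f_{ji}(k)=t_i(k)\phi_{ij}(k)$, $F_{ij}=\sum_k f_{ij}(k)$, $Y_i=\sum_k y_i(k)$. $D_{ij},B_i$ are continuously differentiable, increasing, convex, zero at $0$. Marginal cost: $\frac{\partial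 T}{\partial r_i(k)}=\sum_{j\in\mathcal N(i)}\phi_{ij}(k)\big(D'_{ji}(F_{ji})+\frac{\partial T}{\partial r_j(k)}\big)$, zero if $i\in\mathcal S_k$ or $y_i(k)=1$. Modified condition (MC): with $\delta_i(k)=\min\{B_i'(Y_i)/t_i(k),\ \min_{j\in\mathcal N(i)}(D'_{ji}(F_{ji})+\frac{\partial T}{\partial r_j(k)})\}$ (where $B_i'(Y_i)/t_i(k):=\infty$ if $t_i(k)=0$), for all $i,k$: $B_i'(Y_i)=t_i(k)\delta_i(k)$ if $y_i(k)>0$, $B_i'(Y_i)\ge t_i(k)\delta_i(k)$ if $y_i(k)=0$; and for all $j\in\mathcal N(i)$, $D'_{ji}(F_{ji})+\frac{\partial T}{\partial r_j(k)}=\delta_i(k)$ if $\phi_{ij}(k)>0$, $\ge\delta_i(k)$ if $\phi_{ij}(k)=0$. *)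

theory Defs
  imports "HOL-Analysis.Analysis"
begin

text \<open>Vertices have a finite type 'v, catalog items a finite type 'c.
  phi i j k is the forwarding fraction phi_ij(k), y i k is the caching variable y_i(k),
  r i k the exogenous request rate, S k the designated server set of item k.\<close>

definition nbrs :: "('v \<times> 'v) set \<Rightarrow> 'v \<Rightarrow> 'v set" where
  "nbrs E i = {j. (i, j) \<in> E}"

definition arr_eq :: "('v::finite \<Rightarrow> 'c \<Rightarrow> real) \<Rightarrow> ('v \<Rightarrow> 'v \<Rightarrow> 'c \<Rightarrow> real) \<Rightarrow> 'c \<Rightarrow> ('v \<Rightarrow> real) \<Rightarrow> bool" where
  "arr_eq r phi k t \<longleftrightarrow> (\<forall>i. t i = r i k + (\<Sum>j\<in>UNIV. t j * phi j i k))"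

definition arrival :: "('v::finite \<Rightarrow> 'c \<Rightarrow> real) \<Rightarrow> ('v \<Rightarrow> 'v \<Rightarrow> 'c \<Rightarrow> real) \<Rightarrow> 'v \<Rightarrow> 'c \<Rightarrow> real" where
  "arrival r phi i k = (THE t. arr_eq r phi k t) i"

definition feasible :: "('v::finite \<times> 'v) set \<Rightarrow> ('c \<Rightarrow> 'v set) \<Rightarrow> ('v \<Rightarrow> 'c \<Rightarrow> real)
    \<Rightarrow> ('v \<Rightarrow> 'v \<Rightarrow> 'c \<Rightarrow> real) \<Rightarrow> ('v \<Rightarrow> 'c \<Rightarrow> real) \<Rightarrow> bool" where
  "feasible E S r phi y \<longleftrightarrow>
     (\<forall>i j k. 0 \<le> phi i j k \<and> phi i j k \<le> 1) \<and>
     (\<forall>i j k. (i, j) \<notin> E \<longrightarrow> phi i j k = 0) \<and>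
     (\<forall>i k. 0 \<le> y i k \<and> y i k \<le> 1) \<and>
     (\<forall>i k. y i k + (\<Sum>j\<in>UNIV. phi i j k) = (if i \<in> S k then 0 else 1)) \<and>
     (\<forall>k. \<exists>!t. arr_eq r phi k t) \<and>
     (\<forall>i k. 0 \<le> arrival r phi i k)"

definition linkflow :: "('v::finite \<Rightarrow> 'c::finite \<Rightarrow> real) \<Rightarrow> ('v \<Rightarrow> 'v \<Rightarrow> 'c \<Rightarrow> real) \<Rightarrow> 'v \<Rightarrow> 'v \<Rightarrow> real" where
  "linkflow r phi i j = (\<Sum>k\<in>UNIV. arrival r phi j k * phi j i k)"

definition cacheload :: "('v \<Rightarrow> 'c::finite \<Rightarrow> real) \<Rightarrow> 'v \<Rightarrow> real" where
  "cacheload y i = (\<Sum>k\<in>UNIV. y i k)"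

definition total_cost :: "('v::finite \<times> 'v) set \<Rightarrow> ('v \<Rightarrow> 'v \<Rightarrow> real \<Rightarrow> real) \<Rightarrow> ('v \<Rightarrow> real \<Rightarrow> real)
    \<Rightarrow> ('v \<Rightarrow> 'c::finite \<Rightarrow> real) \<Rightarrow> ('v \<Rightarrow> 'v \<Rightarrow> 'c \<Rightarrow> real) \<Rightarrow> ('v \<Rightarrow> 'c \<Rightarrow> real) \<Rightarrow> real" where
  "total_cost E D B r phi y =
     (\<Sum>(i, j)\<in>E. D i j (linkflow r phi i j)) + (\<Sum>i\<in>UNIV. B i (cacheload y i))"

text \<open>Recursive equations defining the marginal costs dT/dr_i(k) (for item k);
  D' i j is the derivative of D i j.\<close>
definition mc_eq :: "('v::finite \<times> 'v) set \<Rightarrow> ('c::finite \<Rightarrow> 'v set) \<Rightarrow> ('v \<Rightarrow> 'v \<Rightarrow> real \<Rightarrow> real)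
    \<Rightarrow> ('v \<Rightarrow> 'c \<Rightarrow> real) \<Rightarrow> ('v \<Rightarrow> 'v \<Rightarrow> 'c \<Rightarrow> real) \<Rightarrow> ('v \<Rightarrow> 'c \<Rightarrow> real) \<Rightarrow> 'c \<Rightarrow> ('v \<Rightarrow> real) \<Rightarrow> bool" where
  "mc_eq E S D' r phi y k m \<longleftrightarrow>
     (\<forall>i. m i = (if i \<in> S k \<or> y i k = 1 then 0
                 else (\<Sum>j\<in>nbrs E i. phi i j k * (D' j i (linkflow r phi j i) + m j))))"

definition marginal :: "('v::finite \<times> 'v) set \<Rightarrow> ('c::finite \<Rightarrow> 'v set) \<Rightarrow> ('v \<Rightarrow> 'v \<Rightarrow> real \<Rightarrow> real)
    \<Rightarrow> ('v \<Rightarrow> 'c \<Rightarrow> real) \<Rightarrow> ('v \<Rightarrow> 'v \<Rightarrow> 'c \<Rightarrow> real) \<Rightarrow> ('v \<Rightarrow> 'c \<Rightarrow> real) \<Rightarrow> 'v \<Rightarrow> 'c \<Rightarrow> real" where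
  "marginal E S D' r phi y i k = (THE m. mc_eq E S D' r phi y k m) i"

text \<open>delta_i(k) as an extended real: B_i'(Y_i)/t_i(k) is \<infinity> when t_i(k)=0, and the
  minimum over an empty neighbour set is \<infinity>.\<close>
definition delta :: "('v::finite \<times> 'v) set \<Rightarrow> ('c::finite \<Rightarrow> 'v set) \<Rightarrow> ('v \<Rightarrow> 'v \<Rightarrow> real \<Rightarrow> real)
    \<Rightarrow> ('v \<Rightarrow> real \<Rightarrow> real) \<Rightarrow> ('v \<Rightarrow> 'c \<Rightarrow> real) \<Rightarrow> ('v \<Rightarrow> 'v \<Rightarrow> 'c \<Rightarrow> real) \<Rightarrow> ('v \<Rightarrow> 'c \<Rightarrow> real)
    \<Rightarrow> 'v \<Rightarrow> 'c \<Rightarrow> ereal" where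
  "delta E S D' B' r phi y i k =
     min (if arrival r phi i k = 0 then \<infinity>
          else ereal (B' i (cacheload y i) / arrival r phi i k))
         (INF j\<in>nbrs E i. ereal (D' j i (linkflow r phi j i) + marginal E S D' r phi y j k))"

definition MC :: "('v::finite \<times> 'v) set \<Rightarrow> ('c::finite \<Rightarrow> 'v set) \<Rightarrow> ('v \<Rightarrow> 'v \<Rightarrow> real \<Rightarrow> real)
    \<Rightarrow> ('v \<Rightarrow> real \<Rightarrow> real) \<Rightarrow> ('v \<Rightarrow> 'c \<Rightarrow> real) \<Rightarrow> ('v \<Rightarrow> 'v \<Rightarrow> 'c \<Rightarrow> real) \<Rightarrow> ('v \<Rightarrow> 'c \<Rightarrow> real) \<Rightarrow> bool" where
  "MC E S D' B' r phi y \<longleftrightarrow>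
     (\<forall>i k.
        (y i k > 0 \<longrightarrow> ereal (B' i (cacheload y i)) = ereal (arrival r phi i k) * delta E S D' B' r phi y i k) \<and>
        (y i k = 0 \<longrightarrow> ereal (B' i (cacheload y i)) \<ge> ereal (arrival r phi i k) * delta E S D' B' r phi y i k) \<and>
        (\<forall>j\<in>nbrs E i.
           (phi i j k > 0 \<longrightarrow> ereal (D' j i (linkflow r phi j i) + marginal E S D' r phi y j k) = delta E S D' B' r phi y i k) \<and>
           (phi i j k = 0 \<longrightarrow> ereal (D' j i (linkflow r phi j i) + marginal E S D' r phi y j k) \<ge> delta E S D' B' r phi y i k)))"

definition cost_fun :: "(real \<Rightarrow> real) \<Rightarrow> (real \<Rightarrow> real) \<Rightarrow> bool" where
  "cost_fun g g' \<longleftrightarrow>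
     (\<forall>x\<ge>0. (g has_real_derivative g' x) (at x within {0..})) \<and>
     continuous_on {0..} g' \<and> mono_on {0..} g \<and> convex_on {0..} g \<and> g 0 = 0"

end

theory Submission
  imports Defs
begin


lemma int0: "interior {0::real..} = {0<..}"
  by (rule interior_Ici[of "-1"]) simp

lemma cost_funD:
  assumes "cost_fun g g'"
  shows "\<And>x. x \<ge> 0 \<Longrightarrow> (g has_real_derivative g' x) (at x within {0..})"
    and "continuous_on {0..} g'" and "mono_on {0..} g" and "convex_on {0..} g" and "g 0 = 0"
  using assms unfolding cost_fun_def by blast+

lemma cost_deriv_at:
  assumes "cost_fun g g'" "c > 0"
  shows "(g has_real_derivative g' c) (at c)"
proof -
  have "(g has_real_derivative g' c) (at c within {0..})" using assms cost_funD(1) by simp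
  moreover have "c \<in> interior {0::real..}" using assms by (simp add: int0) 
  ultimately show ?thesis by (metis at_within_interior)
qed

lemma cost_limit_right0:
  assumes "cost_fun g g'" 
  shows "(g' \<longlongrightarrow> g' 0) (at_right 0)" and "(g \<longlongrightarrow> g 0) (at_right 0)"
proof -
  have "continuous_on {0..} g'" using cost_funD[OF assms] by blast
  hence "(g' \<longlongrightarrow> g' 0) (at 0 within {0..})" by (simp add: continuous_on_def)
  thus "(g' \<longlongrightarrow> g' 0) (at_right 0)" by (rule tendsto_mono[rotated]) (rule at_le, auto)
  have "(g has_real_derivative g' 0) (at 0 within {0..})" using cost_funD(1)[OF assms] by simp
  hence "continuous (at 0 within {0..}) g" by (rule DERIV_continuous)
  hence "(g \<longlongrightarrow> g 0) (at 0 within {0..})" by (simp add: continuous_within)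
  thus "(g \<longlongrightarrow> g 0) (at_right 0)" by (rule tendsto_mono[rotated]) (rule at_le, auto)
qed

lemma cost_deriv_nonneg:
  assumes "cost_fun g g'" "x \<ge> 0"
  shows "g' x \<ge> 0"
proof -
  have pos: "g' c \<ge> 0" if "c > 0" for c
  proof (rule mono_on_imp_deriv_nonneg[of "{0..}" g])
    show "mono_on {0..} g" using cost_funD[OF assms(1)] by blast
    show "(g has_real_derivative g' c) (at c)" by (rule cost_deriv_at[OF assms(1) that])
    show "c \<in> interior {0::real..}" using that by (simp add: int0)
  qed
  show ?thesis
  proof (cases "x = 0")
    case True
    have ev: "eventually (\<lambda>c. g' c \<ge> 0) (at_right (0::real))"
      by (rule eventually_at_rightI[of 0 1]) (auto intro: pos)
    have "g' 0 \<ge> 0"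
      by (rule tendsto_lowerbound[OF cost_limit_right0(1)[OF assms(1)] ev]) simp
    thus ?thesis using True by simp
  next
    case False thus ?thesis using pos assms(2) by simp
  qed
qed

lemma cost_tangent:
  assumes "cost_fun g g'" "x \<ge> 0" "c \<ge> 0"
  shows "g x - g c \<ge> g' c * (x - c)"
proof -
  have cv: "convex_on {0..} g" using cost_funD[OF assms(1)] by blast
  have pos: "g x - g c \<ge> g' c * (x - c)" if "c > 0" for c
  proof (rule convex_on_imp_above_tangent[OF cv])
    show "connected {0::real..}" by simp
    show "c \<in> interior {0::real..}" using that by (simp add: int0)
    show "x \<in> {0..}" using assms by simp
    show "(g has_real_derivative g' c) (at c within {0..})" using cost_funD(1)[OF assms(1)] that by simp
  qed
  show ?thesis
  proof (cases "c = 0")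
    case False thus ?thesis using pos assms(3) by simp
  next
    case True
    have l1: "((\<lambda>c. g' c * (x - c)) \<longlongrightarrow> g' 0 * (x - 0)) (at_right 0)"
      by (intro tendsto_intros cost_limit_right0(1)[OF assms(1)])
    have l2: "((\<lambda>c. g x - g c) \<longlongrightarrow> g x - g 0) (at_right 0)"
      by (intro tendsto_intros cost_limit_right0(2)[OF assms(1)])
    have ev: "eventually (\<lambda>c. g' c * (x - c) \<le> g x - g c) (at_right 0)"
      by (rule eventually_at_rightI[of 0 1]) (auto intro: pos)
    have "g' 0 * (x - 0) \<le> g x - g 0"
      by (rule tendsto_le[OF trivial_limit_at_right_real l2 l1 ev])
    thus ?thesis using True by simp
  qed
qed



lemma lin_unique:
  fixes P :: "'v::finite \<Rightarrow> 'v \<Rightarrow> real"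
  assumes u: "\<exists>!t. \<forall>i. t i = r i + (\<Sum>j\<in>UNIV. t j * P j i)"
  shows "\<exists>!t. \<forall>i. t i = c i + (\<Sum>j\<in>UNIV. t j * P j i)"
    and "\<exists>!m. \<forall>i. m i = c i + (\<Sum>j\<in>UNIV. P i j * m j)"
proof -
  define A :: "real^'v^'v" where "A = (\<chi> i j. (if i = j then 1 else 0) - P j i)"
  have Av: "(A *v x) $ i = x $ i - (\<Sum>j\<in>UNIV. x $ j * P j i)" for x i
  proof -
    have "(A *v x) $ i = (\<Sum>j\<in>UNIV. x $ j * ((if i = j then 1 else 0) - P j i))"
      by (simp add: A_def matrix_vector_mult_def mult.commute)
    also have "\<dots> = (\<Sum>j\<in>UNIV. (if i = j then x $ j else 0)) - (\<Sum>j\<in>UNIV. x $ j * P j i)"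
      by (simp add: right_diff_distrib sum_subtractf if_distrib[of "\<lambda>a. x $ _ * a"] cong: if_cong)
    finally show ?thesis by simp
  qed
  have ATv: "(transpose A *v x) $ i = x $ i - (\<Sum>j\<in>UNIV. P i j * x $ j)" for x i
  proof -
    have "(transpose A *v x) $ i = (\<Sum>j\<in>UNIV. ((if j = i then 1 else 0) - P i j) * x $ j)"
      by (simp add: A_def transpose_def matrix_vector_mult_def)
    also have "\<dots> = (\<Sum>j\<in>UNIV. (if j = i then x $ j else 0)) - (\<Sum>j\<in>UNIV. P i j * x $ j)"
    proof -
      have "\<And>j. ((if j = i then 1 else 0) - P i j) * x $ j = (if j = i then x $ j else 0) - P i j * x $ j"
        by (simp add: left_diff_distrib)
      thus ?thesis by (simp only: sum_subtractf)
    qed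
    finally show ?thesis by simp
  qed
  obtain t0 where t0: "\<forall>i. t0 i = r i + (\<Sum>j\<in>UNIV. t0 j * P j i)" using u by blast
  have "inj ((*v) A)"
  proof (rule injI)
    fix x x' assume "A *v x = A *v x'"
    hence eq: "\<And>i. (A *v (x - x')) $ i = 0" by (simp add: matrix_vector_mult_diff_distrib)
    define t1 where "t1 = (\<lambda>i. t0 i + (x - x') $ i)"
    have "\<forall>i. t1 i = r i + (\<Sum>j\<in>UNIV. t1 j * P j i)"
    proof
      fix i
      have "(x - x') $ i = (\<Sum>j\<in>UNIV. (x - x') $ j * P j i)" using eq[of i] unfolding Av by simp
      moreover have "t0 i = r i + (\<Sum>j\<in>UNIV. t0 j * P j i)" using t0 by blast
      moreover have "(\<Sum>j\<in>UNIV. t1 j * P j i) = (\<Sum>j\<in>UNIV. t0 j * P j i) + (\<Sum>j\<in>UNIV. (x - x') $ j * P j i)"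
        by (simp add: t1_def sum.distrib distrib_right)
      ultimately show "t1 i = r i + (\<Sum>j\<in>UNIV. t1 j * P j i)"
        unfolding t1_def by linarith
    qed
    hence "t1 = t0" using u t0 by blast
    hence "\<And>i. (x - x') $ i = 0" unfolding t1_def by (metis add_cancel_left_right)
    thus "x = x'" by (metis vec_eq_iff zero_index eq_iff_diff_eq_0)
  qed
  hence "\<exists>B. B ** A = mat 1" using matrix_left_invertible_injective by blast
  hence inv: "invertible A" using matrix_left_right_inverse invertible_def by blast
  hence invT: "invertible (transpose A)" by (rule transpose_invertible)
  have bij: "inj ((*v) A) \<and> surj ((*v) A)" if "invertible A" for A :: "real^'v^'v"
    using that unfolding invertible_def
    using matrix_left_invertible_injective matrix_right_invertible_surjective by blast
  show "\<exists>!t. \<forall>i. t i = c i + (\<Sum>j\<in>UNIV. t j * P j i)"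
  proof -
    have "surj ((*v) A)" using bij[OF inv] by blast
    then obtain x where x: "(\<chi> i. c i) = A *v x" by (rule surjE)
    have ex: "\<forall>i. x $ i = c i + (\<Sum>j\<in>UNIV. x $ j * P j i)"
    proof
      fix i
      have "(A *v x) $ i = c i" using x by (metis vec_lambda_beta)
      thus "x $ i = c i + (\<Sum>j\<in>UNIV. x $ j * P j i)" unfolding Av by linarith
    qed
    show ?thesis
    proof (rule ex1I[of _ "\<lambda>i. x $ i"])
      show "\<forall>i. x $ i = c i + (\<Sum>j\<in>UNIV. x $ j * P j i)" by (rule ex)
    next
      fix t assume t: "\<forall>i. t i = c i + (\<Sum>j\<in>UNIV. t j * P j i)"
      have "A *v (\<chi> i. t i) = A *v x"
      proof (rule vec_eq_iff[THEN iffD2], rule allI)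
        fix i
        have "t i = c i + (\<Sum>j\<in>UNIV. t j * P j i)" "x $ i = c i + (\<Sum>j\<in>UNIV. x $ j * P j i)"
          using t ex by blast+
        thus "(A *v (\<chi> i. t i)) $ i = (A *v x) $ i" unfolding Av by (simp del: vec_lambda_beta add: vec_lambda_beta[of t])
      qed
      hence "(\<chi> i. t i) = x" using bij[OF inv] by (simp add: inj_eq)
      thus "t = (\<lambda>i. x $ i)" by auto
    qed
  qed
  show "\<exists>!m. \<forall>i. m i = c i + (\<Sum>j\<in>UNIV. P i j * m j)"
  proof -
    have "surj ((*v) (transpose A))" using bij[OF invT] by blast
    then obtain x where x: "(\<chi> i. c i) = transpose A *v x" by (rule surjE)
    have ex: "\<forall>i. x $ i = c i + (\<Sum>j\<in>UNIV. P i j * x $ j)"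
    proof
      fix i
      have "(transpose A *v x) $ i = c i" using x by (metis vec_lambda_beta)
      thus "x $ i = c i + (\<Sum>j\<in>UNIV. P i j * x $ j)" unfolding ATv by linarith
    qed
    show ?thesis
    proof (rule ex1I[of _ "\<lambda>i. x $ i"])
      show "\<forall>i. x $ i = c i + (\<Sum>j\<in>UNIV. P i j * x $ j)" by (rule ex)
    next
      fix t assume t: "\<forall>i. t i = c i + (\<Sum>j\<in>UNIV. P i j * t j)"
      have "transpose A *v (\<chi> i. t i) = transpose A *v x"
      proof (rule vec_eq_iff[THEN iffD2], rule allI)
        fix i
        have "t i = c i + (\<Sum>j\<in>UNIV. P i j * t j)" "x $ i = c i + (\<Sum>j\<in>UNIV. P i j * x $ j)"
          using t ex by blast+
        thus "(transpose A *v (\<chi> i. t i)) $ i = (transpose A *v x) $ i" unfolding ATv by simp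
      qed
      hence "(\<chi> i. t i) = x" by (rule injD[OF conjunct1[OF bij[OF invT]]])
      thus "t = (\<lambda>i. x $ i)" by auto
    qed
  qed
qed


lemma ex1_uniq: "\<exists>!x. P x \<Longrightarrow> P a \<Longrightarrow> P b \<Longrightarrow> a = b" by blast

lemma nonneg_sol:
  fixes Q :: "'v::finite \<Rightarrow> 'v \<Rightarrow> real"
  assumes Qnn: "\<And>i j. 0 \<le> Q i j"
    and row: "\<And>j. (\<Sum>i\<in>UNIV. Q j i) \<le> 1"
    and u: "\<exists>!t. \<forall>i. t i = r i + (\<Sum>j\<in>UNIV. t j * Q j i)"
    and a: "\<And>i. a i = c i + (\<Sum>j\<in>UNIV. a j * Q j i)"
    and c: "\<And>i. 0 \<le> c i"
  shows "0 \<le> a i"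
proof -
  define w where "w = (\<lambda>i. max (- a i) 0)"
  have wnn: "0 \<le> w i" for i by (simp add: w_def)
  have wle: "w i \<le> (\<Sum>j\<in>UNIV. w j * Q j i)" for i
  proof (cases "a i \<ge> 0")
    case True
    hence "w i = 0" by (simp add: w_def)
    thus ?thesis by (simp add: sum_nonneg wnn Qnn)
  next
    case False
    hence "w i = - a i" by (simp add: w_def)
    also have "\<dots> = - c i + (\<Sum>j\<in>UNIV. (- a j) * Q j i)" 
    proof -
      have "(\<Sum>j\<in>UNIV. (- a j) * Q j i) = - (\<Sum>j\<in>UNIV. a j * Q j i)" by (simp add: sum_negf)
      thus ?thesis using a[of i] by linarith
    qed
    also have "\<dots> \<le> (\<Sum>j\<in>UNIV. (- a j) * Q j i)" using c[of i] by simp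
    also have "\<dots> \<le> (\<Sum>j\<in>UNIV. w j * Q j i)"
      by (rule sum_mono, rule mult_right_mono) (simp_all add: w_def Qnn)
    finally show ?thesis .
  qed
  have "(\<Sum>i\<in>UNIV. (\<Sum>j\<in>UNIV. w j * Q j i)) = (\<Sum>j\<in>UNIV. w j * (\<Sum>i\<in>UNIV. Q j i))"
    by (subst sum.swap) (simp add: sum_distrib_left)
  also have "\<dots> \<le> (\<Sum>j\<in>UNIV. w j)"
    by (rule sum_mono) (rule mult_left_le[OF row wnn])
  finally have "(\<Sum>i\<in>UNIV. (\<Sum>j\<in>UNIV. w j * Q j i) - w i) \<le> 0"
    by (simp add: sum_subtractf)
  moreover have "\<forall>i\<in>UNIV. 0 \<le> (\<Sum>j\<in>UNIV. w j * Q j i) - w i" using wle by simp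
  ultimately have "\<forall>i\<in>UNIV. (\<Sum>j\<in>UNIV. w j * Q j i) - w i = 0"
    using sum_nonneg_eq_0_iff[of UNIV "\<lambda>i. (\<Sum>j\<in>UNIV. w j * Q j i) - w i"] sum_nonneg[of UNIV "\<lambda>i. (\<Sum>j\<in>UNIV. w j * Q j i) - w i"]
    by simp
  hence ws: "\<forall>i. w i = 0 + (\<Sum>j\<in>UNIV. w j * Q j i)" by simp
  have zs: "\<forall>i. (\<lambda>_. 0::real) i = 0 + (\<Sum>j\<in>UNIV. (\<lambda>_. 0::real) j * Q j i)" by simp
  have "w = (\<lambda>_. 0)" 
    apply (rule ex1_uniq[where P="\<lambda>t. \<forall>i. t i = 0 + (\<Sum>j\<in>UNIV. t j * Q j i)"])
    apply (rule lin_unique(1)[OF u, of "\<lambda>_. 0"])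
    apply (rule ws)
    apply simp
    done
  hence "w i = 0" by simp
  thus ?thesis by (simp add: w_def)
qed


lemma nonneg_dual:
  fixes P :: "'v::finite \<Rightarrow> 'v \<Rightarrow> real"
  assumes Pnn: "\<And>i j. 0 \<le> P i j"
    and row: "\<And>j. (\<Sum>i\<in>UNIV. P j i) \<le> 1"
    and u: "\<exists>!t. \<forall>i. t i = r i + (\<Sum>j\<in>UNIV. t j * P j i)"
    and m: "\<And>i. m i = c i + (\<Sum>j\<in>UNIV. P i j * m j)"
    and c: "\<And>i. 0 \<le> c i"
  shows "0 \<le> m i0"
proof -
  define e where "e = (\<lambda>i. if i = i0 then 1 else (0::real))"
  have "\<exists>z. \<forall>i. z i = e i + (\<Sum>j\<in>UNIV. z j * P j i)"
    by (rule ex1_implies_ex[OF lin_unique(1)[OF u, of e]])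
  then obtain z where z: "\<forall>i. z i = e i + (\<Sum>j\<in>UNIV. z j * P j i)" by (rule exE)
  have zi: "z i = e i + (\<Sum>j\<in>UNIV. z j * P j i)" for i by (rule spec[OF z])
  have znn: "0 \<le> z i" for i
    by (rule nonneg_sol[OF Pnn row u zi]) (simp add: e_def)
  have "(\<Sum>i\<in>UNIV. e i * m i) = (\<Sum>i\<in>UNIV. if i = i0 then m i else 0)"
    by (rule sum.cong) (simp_all add: e_def)
  hence "m i0 = (\<Sum>i\<in>UNIV. e i * m i)" by simp
  also have "\<dots> = (\<Sum>i\<in>UNIV. (z i - (\<Sum>j\<in>UNIV. z j * P j i)) * m i)"
  proof (rule sum.cong[OF refl])
    fix i show "e i * m i = (z i - (\<Sum>j\<in>UNIV. z j * P j i)) * m i" using zi[of i] by simp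
  qed
  also have "\<dots> = (\<Sum>i\<in>UNIV. z i * m i) - (\<Sum>i\<in>UNIV. \<Sum>j\<in>UNIV. z j * P j i * m i)"
    by (simp add: left_diff_distrib sum_subtractf sum_distrib_right)
  also have "(\<Sum>i\<in>UNIV. \<Sum>j\<in>UNIV. z j * P j i * m i) = (\<Sum>i\<in>UNIV. z i * (\<Sum>j\<in>UNIV. P i j * m j))"
    by (subst sum.swap) (simp add: sum_distrib_left mult.assoc)
  also have "(\<Sum>i\<in>UNIV. z i * m i) - (\<Sum>i\<in>UNIV. z i * (\<Sum>j\<in>UNIV. P i j * m j)) = (\<Sum>i\<in>UNIV. z i * c i)"
  proof -
    have "\<And>i. z i * m i - z i * (\<Sum>j\<in>UNIV. P i j * m j) = z i * c i"
    proof -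
      fix i have "m i - (\<Sum>j\<in>UNIV. P i j * m j) = c i" using m[of i] by linarith
      thus "z i * m i - z i * (\<Sum>j\<in>UNIV. P i j * m j) = z i * c i" by (metis right_diff_distrib)
    qed
    thus ?thesis by (simp only: sum_subtractf[symmetric])
  qed
  also have "\<dots> \<ge> 0" by (rule sum_nonneg) (simp add: znn c)
  finally show ?thesis .
qed



lemma row_le1:
  fixes P :: "'v::finite \<Rightarrow> 'v \<Rightarrow> real"
  assumes "y i + (\<Sum>j\<in>UNIV. P i j) = (if s then 0 else 1)" "0 \<le> y i"
  shows "(\<Sum>j\<in>UNIV. P i j) \<le> 1"
  using assms by (auto split: if_splits)

lemma arr_cmp:
  fixes P P' :: "'v::finite \<Rightarrow> 'v \<Rightarrow> real"
  assumes Pnn: "\<And>i j. 0 \<le> P i j" and le: "\<And>i j. P i j \<le> P' i j"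
    and row: "\<And>j. (\<Sum>i\<in>UNIV. P' j i) \<le> 1"
    and u': "\<exists>!x. \<forall>i. x i = r i + (\<Sum>j\<in>UNIV. x j * P' j i)"
    and tsol: "\<And>i. t i = r i + (\<Sum>j\<in>UNIV. t j * P j i)"
    and t'sol: "\<And>i. t' i = r i + (\<Sum>j\<in>UNIV. t' j * P' j i)"
    and tnn: "\<And>i. 0 \<le> t i"
  shows "t i \<le> t' i"
proof -
  define a where "a = (\<lambda>i. t' i - t i)"
  define c where "c = (\<lambda>i. \<Sum>j\<in>UNIV. t j * (P' j i - P j i))"
  have "a i = c i + (\<Sum>j\<in>UNIV. a j * P' j i)" for i
  proof -
    have "(\<Sum>j\<in>UNIV. a j * P' j i) = (\<Sum>j\<in>UNIV. t' j * P' j i) - (\<Sum>j\<in>UNIV. t j * P' j i)"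
      by (simp add: a_def left_diff_distrib sum_subtractf)
    moreover have "c i = (\<Sum>j\<in>UNIV. t j * P' j i) - (\<Sum>j\<in>UNIV. t j * P j i)"
      by (simp add: c_def right_diff_distrib sum_subtractf)
    moreover note tsol[of i] t'sol[of i]
    ultimately show ?thesis unfolding a_def by linarith
  qed
  moreover have "0 \<le> c i" for i
    unfolding c_def by (rule sum_nonneg) (simp add: tnn le)
  ultimately have "0 \<le> a i"
    using nonneg_sol[of P' r a c, OF _ row u'] Pnn le by (meson order_trans)
  thus ?thesis by (simp add: a_def)
qed


lemma pt:
  fixes P P' d M :: "'v::finite \<Rightarrow> real" and N :: "'v set" and \<delta> :: ereal
  assumes Pnn: "\<And>j. 0 \<le> P j" and P'nn: "\<And>j. 0 \<le> P' j"
    and Poff: "\<And>j. j \<notin> N \<Longrightarrow> P j = 0" and P'off: "\<And>j. j \<notin> N \<Longrightarrow> P' j = 0"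
    and cons: "yi + (\<Sum>j\<in>UNIV. P j) = v" and cons': "yi' + (\<Sum>j\<in>UNIV. P' j) = v"
    and Mi: "Mi = (\<Sum>j\<in>UNIV. P j * (d j + M j))"
    and \<delta>le: "\<And>j. j \<in> N \<Longrightarrow> \<delta> \<le> ereal (d j + M j)" and \<delta>nn: "0 \<le> \<delta>"
    and mcP: "\<And>j. j \<in> N \<Longrightarrow> P j > 0 \<Longrightarrow> ereal (d j + M j) = \<delta>"
    and mcy1: "yi > 0 \<Longrightarrow> ereal b = ereal ti * \<delta>"
    and mcy0: "yi = 0 \<Longrightarrow> ereal b \<ge> ereal ti * \<delta>"
    and yinn: "0 \<le> yi" and yi'nn: "0 \<le> yi'" and tinn: "0 \<le> ti" and ti'nn: "0 \<le> ti'"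
    and sign: "(ti \<le> ti' \<and> yi' \<le> yi) \<or> (ti' \<le> ti \<and> yi \<le> yi')"
  shows "0 \<le> ti' * ((\<Sum>j\<in>UNIV. P' j * (d j + M j)) - Mi) + b * (yi' - yi)"
proof (cases "N = {}")
  case True
  hence "P j = 0" "P' j = 0" for j using Poff P'off by auto
  thus ?thesis using Mi cons cons' by simp
next
  case False
  then obtain j0 where j0: "j0 \<in> N" by blast
  have "\<delta> \<noteq> \<infinity>" using \<delta>le[OF j0] by auto
  moreover have "\<delta> \<noteq> -\<infinity>" using \<delta>nn by auto
  ultimately obtain dr where dr: "\<delta> = ereal dr" by (cases \<delta>) auto
  have drnn: "0 \<le> dr" using \<delta>nn dr by simp
  have eqP: "P j * (d j + M j) = P j * dr" for j
  proof (cases "P j > 0")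
    case True
    hence "j \<in> N" using Poff by force
    with mcP[OF this True] dr show ?thesis by simp
  next
    case False hence "P j = 0" using Pnn[of j] by simp
    thus ?thesis by simp
  qed
  have geP': "P' j * (d j + M j) \<ge> P' j * dr" for j
  proof (cases "j \<in> N")
    case True
    hence "dr \<le> d j + M j" using \<delta>le[OF True] dr by simp
    thus ?thesis using P'nn[of j] by (simp add: mult_left_mono)
  next
    case False thus ?thesis using P'off by simp
  qed
  define s where "s = (\<Sum>j\<in>UNIV. P j)"
  define s' where "s' = (\<Sum>j\<in>UNIV. P' j)"
  have "Mi = (\<Sum>j\<in>UNIV. P j * dr)" unfolding Mi by (simp add: eqP)
  hence "Mi = dr * s" unfolding s_def by (simp add: sum_distrib_left mult.commute)
  moreover have "(\<Sum>j\<in>UNIV. P' j * (d j + M j)) \<ge> dr * s'"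
  proof -
    have "(\<Sum>j\<in>UNIV. P' j * (d j + M j)) \<ge> (\<Sum>j\<in>UNIV. P' j * dr)" by (rule sum_mono) (rule geP')
    moreover have "(\<Sum>j\<in>UNIV. P' j * dr) = dr * s'" by (simp add: s'_def sum_distrib_left mult.commute)
    ultimately show ?thesis by simp
  qed
  ultimately have "ti' * ((\<Sum>j\<in>UNIV. P' j * (d j + M j)) - Mi) \<ge> ti' * (dr * s' - dr * s)"
    using ti'nn by (simp add: mult_left_mono)
  moreover have "s' - s = yi - yi'" using cons cons' unfolding s_def s'_def by linarith
  ultimately have Z0: "ti' * ((\<Sum>j\<in>UNIV. P' j * (d j + M j)) - Mi) \<ge> ti' * dr * (yi - yi')"
    by (metis mult.assoc right_diff_distrib)
  have e2: "(yi' - yi) * (b - ti' * dr) = b * (yi' - yi) + ti' * dr * (yi - yi')" by (simp add: algebra_simps)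
  have Z: "ti' * ((\<Sum>j\<in>UNIV. P' j * (d j + M j)) - Mi) + b * (yi' - yi) \<ge> (yi' - yi) * (b - ti' * dr)"
    using Z0 e2 by linarith
  have "0 \<le> (yi' - yi) * (b - ti' * dr)"
  proof (cases "yi > 0")
    case True
    hence "b = ti * dr" using mcy1 dr by simp
    hence e: "(yi' - yi) * (b - ti' * dr) = ((yi' - yi) * (ti - ti')) * dr" by (simp add: algebra_simps)
    have "0 \<le> (yi' - yi) * (ti - ti')"
      using sign by (auto intro: mult_nonpos_nonpos mult_nonneg_nonneg)
    thus ?thesis unfolding e using drnn by simp
  next
    case False
    hence y0: "yi = 0" using yinn by simp
    hence "b \<ge> ti * dr" using mcy0 dr by simp
    show ?thesis
    proof (cases "ti \<le> ti' \<and> yi' \<le> yi")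
      case True thus ?thesis using y0 yi'nn by simp
    next
      case False
      hence "ti' \<le> ti" using sign by auto
      hence "ti' * dr \<le> ti * dr" using drnn by (simp add: mult_right_mono)
      thus ?thesis using y0 yi'nn \<open>b \<ge> ti * dr\<close> by simp
    qed
  qed
  with Z show ?thesis by linarith
qed


lemma swapsum:
  fixes P :: "'v::finite \<Rightarrow> 'v \<Rightarrow> real"
  assumes tsol: "\<And>j. t j = r j + (\<Sum>i\<in>UNIV. t i * P i j)"
  shows "(\<Sum>i\<in>UNIV. t i * (\<Sum>j\<in>UNIV. P i j * M j)) = (\<Sum>j\<in>UNIV. M j * t j) - (\<Sum>j\<in>UNIV. M j * r j)"
proof -
  have "(\<Sum>i\<in>UNIV. t i * (\<Sum>j\<in>UNIV. P i j * M j)) = (\<Sum>i\<in>UNIV. \<Sum>j\<in>UNIV. M j * (t i * P i j))"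
    by (simp add: sum_distrib_left algebra_simps)
  also have "\<dots> = (\<Sum>j\<in>UNIV. M j * (\<Sum>i\<in>UNIV. t i * P i j))"
    by (subst sum.swap) (simp add: sum_distrib_left)
  also have "\<dots> = (\<Sum>j\<in>UNIV. M j * t j - M j * r j)"
  proof (rule sum.cong[OF refl])
    fix j
    have "(\<Sum>i\<in>UNIV. t i * P i j) = t j - r j" using tsol[of j] by linarith
    thus "M j * (\<Sum>i\<in>UNIV. t i * P i j) = M j * t j - M j * r j" by (simp add: right_diff_distrib)
  qed
  also have "\<dots> = (\<Sum>j\<in>UNIV. M j * t j) - (\<Sum>j\<in>UNIV. M j * r j)" by (rule sum_subtractf)
  finally show ?thesis .
qed

lemma perk:
  fixes P P' d :: "'v::finite \<Rightarrow> 'v \<Rightarrow> real" and t t' r y y' b M v :: "'v \<Rightarrow> real"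
    and N :: "'v \<Rightarrow> 'v set" and \<delta> :: "'v \<Rightarrow> ereal"
  assumes Pnn: "\<And>i j. 0 \<le> P i j" and P'nn: "\<And>i j. 0 \<le> P' i j"
    and Poff: "\<And>i j. j \<notin> N i \<Longrightarrow> P i j = 0" and P'off: "\<And>i j. j \<notin> N i \<Longrightarrow> P' i j = 0"
    and cons: "\<And>i. y i + (\<Sum>j\<in>UNIV. P i j) = v i" and cons': "\<And>i. y' i + (\<Sum>j\<in>UNIV. P' i j) = v i"
    and tsol: "\<And>i. t i = r i + (\<Sum>j\<in>UNIV. t j * P j i)"
    and t'sol: "\<And>i. t' i = r i + (\<Sum>j\<in>UNIV. t' j * P' j i)"
    and tnn: "\<And>i. 0 \<le> t i" and t'nn: "\<And>i. 0 \<le> t' i"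
    and u: "\<exists>!x. \<forall>i. x i = r i + (\<Sum>j\<in>UNIV. x j * P j i)"
    and u': "\<exists>!x. \<forall>i. x i = r i + (\<Sum>j\<in>UNIV. x j * P' j i)"
    and Msol: "\<And>i. M i = (\<Sum>j\<in>UNIV. P i j * (d i j + M j))"
    and \<delta>le: "\<And>i j. j \<in> N i \<Longrightarrow> \<delta> i \<le> ereal (d i j + M j)" and \<delta>nn: "\<And>i. 0 \<le> \<delta> i"
    and mcP: "\<And>i j. j \<in> N i \<Longrightarrow> P i j > 0 \<Longrightarrow> ereal (d i j + M j) = \<delta> i"
    and mcy1: "\<And>i. y i > 0 \<Longrightarrow> ereal (b i) = ereal (t i) * \<delta> i"
    and mcy0: "\<And>i. y i = 0 \<Longrightarrow> ereal (b i) \<ge> ereal (t i) * \<delta> i"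
    and ynn: "\<And>i. 0 \<le> y i" and y'nn: "\<And>i. 0 \<le> y' i"
    and mono: "(\<forall>i j. P' i j \<ge> P i j) \<or> (\<forall>i j. P' i j \<le> P i j)"
    and vle: "\<And>i. v i \<le> 1"
  shows "0 \<le> (\<Sum>i\<in>UNIV. \<Sum>j\<in>UNIV. d i j * (t' i * P' i j - t i * P i j)) + (\<Sum>i\<in>UNIV. b i * (y' i - y i))"
proof -
  have row: "(\<Sum>i\<in>UNIV. P j i) \<le> 1" for j using cons[of j] ynn[of j] vle[of j] by linarith
  have row': "(\<Sum>i\<in>UNIV. P' j i) \<le> 1" for j using cons'[of j] y'nn[of j] vle[of j] by linarith
  have sign: "(t i \<le> t' i \<and> y' i \<le> y i) \<or> (t' i \<le> t i \<and> y i \<le> y' i)" for i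
    using mono
  proof
    assume up: "\<forall>i j. P' i j \<ge> P i j"
    have "t i \<le> t' i"
      by (rule arr_cmp[of P P' r t t', OF Pnn _ row' u' tsol t'sol tnn]) (use up in blast)
    moreover have "(\<Sum>j\<in>UNIV. P i j) \<le> (\<Sum>j\<in>UNIV. P' i j)" by (rule sum_mono) (use up in blast)
    hence "y' i \<le> y i" using cons[of i] cons'[of i] by linarith
    ultimately show ?thesis by blast
  next
    assume dn: "\<forall>i j. P' i j \<le> P i j"
    have "t' i \<le> t i"
      by (rule arr_cmp[of P' P r t' t, OF P'nn _ row u t'sol tsol t'nn]) (use dn in blast)
    moreover have "(\<Sum>j\<in>UNIV. P' i j) \<le> (\<Sum>j\<in>UNIV. P i j)" by (rule sum_mono) (use dn in blast)
    hence "y i \<le> y' i" using cons[of i] cons'[of i] by linarith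
    ultimately show ?thesis by blast
  qed
  define Z where "Z = (\<lambda>i. t' i * ((\<Sum>j\<in>UNIV. P' i j * (d i j + M j)) - M i) + b i * (y' i - y i))"
  have Znn: "0 \<le> Z i" for i
    unfolding Z_def
    by (rule pt[where P="P i" and P'="P' i" and N="N i" and v="v i" and \<delta>="\<delta> i" and yi="y i"
          and yi'="y' i" and ti="t i" and ti'="t' i" and d="d i" and M=M and Mi="M i" and b="b i",
          OF Pnn[of i] P'nn[of i] Poff[of _ i] P'off[of _ i] cons[of i] cons'[of i] Msol[of i] \<delta>le[of _ i]
          \<delta>nn[of i] mcP[of _ i] mcy1[of i] mcy0[of i] ynn[of i] y'nn[of i] tnn[of i] t'nn[of i] sign[of i]])
  define X where "X = (\<Sum>i\<in>UNIV. t i * (\<Sum>j\<in>UNIV. P i j * d i j))"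
  define X' where "X' = (\<Sum>i\<in>UNIV. t' i * (\<Sum>j\<in>UNIV. P' i j * d i j))"
  define Bt where "Bt = (\<Sum>i\<in>UNIV. b i * (y' i - y i))"
  have L1: "(\<Sum>i\<in>UNIV. \<Sum>j\<in>UNIV. d i j * (t' i * P' i j - t i * P i j)) = X' - X"
    unfolding X_def X'_def
    by (simp add: right_diff_distrib sum_subtractf sum_distrib_left algebra_simps)
  have sw': "(\<Sum>i\<in>UNIV. t' i * (\<Sum>j\<in>UNIV. P' i j * M j)) = (\<Sum>j\<in>UNIV. M j * t' j) - (\<Sum>j\<in>UNIV. M j * r j)"
    by (rule swapsum) (rule t'sol)
  have sw: "(\<Sum>i\<in>UNIV. t i * (\<Sum>j\<in>UNIV. P i j * M j)) = (\<Sum>j\<in>UNIV. M j * t j) - (\<Sum>j\<in>UNIV. M j * r j)"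
    by (rule swapsum) (rule tsol)
  have split: "(\<Sum>j\<in>UNIV. Q j * (e j + M j)) = (\<Sum>j\<in>UNIV. Q j * e j) + (\<Sum>j\<in>UNIV. Q j * M j)"
    for Q e :: "'v \<Rightarrow> real" by (simp add: distrib_left sum.distrib)
  have "(\<Sum>i\<in>UNIV. t i * M i) = (\<Sum>i\<in>UNIV. t i * (\<Sum>j\<in>UNIV. P i j * (d i j + M j)))"
    by (rule sum.cong[OF refl]) (metis Msol)
  also have "\<dots> = X + (\<Sum>i\<in>UNIV. t i * (\<Sum>j\<in>UNIV. P i j * M j))"
    unfolding X_def split by (simp add: distrib_left sum.distrib)
  finally have XR: "X = (\<Sum>j\<in>UNIV. M j * r j)" using sw by (simp add: mult.commute)
  have "(\<Sum>i\<in>UNIV. Z i) = X' + (\<Sum>i\<in>UNIV. t' i * (\<Sum>j\<in>UNIV. P' i j * M j)) - (\<Sum>i\<in>UNIV. t' i * M i) + Bt"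
    unfolding Z_def X'_def Bt_def split
    by (simp add: distrib_left right_diff_distrib sum.distrib sum_subtractf)
  also have "\<dots> = X' - X + Bt" using sw' XR by (simp add: mult.commute)
  finally have "(\<Sum>i\<in>UNIV. Z i) = X' - X + Bt" .
  moreover have "0 \<le> (\<Sum>i\<in>UNIV. Z i)" by (rule sum_nonneg) (simp add: Znn)
  ultimately show ?thesis unfolding L1 Bt_def by simp
qed



lemma arrival_sol:
  assumes "\<exists>!t. arr_eq r phi k t"
  shows "arrival r phi i k = r i k + (\<Sum>j\<in>UNIV. arrival r phi j k * phi j i k)"
proof -
  have "arr_eq r phi k (THE t. arr_eq r phi k t)" by (rule theI'[OF assms])
  hence "\<forall>i. (THE t. arr_eq r phi k t) i = r i k + (\<Sum>j\<in>UNIV. (THE t. arr_eq r phi k t) j * phi j i k)"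
    unfolding arr_eq_def .
  thus ?thesis unfolding arrival_def by (rule spec)
qed

lemma zero_row:
  fixes P :: "'v::finite \<Rightarrow> real"
  assumes "\<And>j. 0 \<le> P j" "(\<Sum>j\<in>UNIV. P j) \<le> 0"
  shows "P j = 0"
proof -
  have "(\<Sum>j\<in>UNIV. P j) = 0" using assms sum_nonneg[of UNIV P] by simp
  thus ?thesis using sum_nonneg_eq_0_iff[of UNIV P] assms(1) by simp
qed

lemma mc_eq_iff:
  fixes phi :: "'v::finite \<Rightarrow> 'v \<Rightarrow> 'c::finite \<Rightarrow> real"
  assumes nn: "\<And>i j. 0 \<le> phi i j k" and off: "\<And>i j. (i, j) \<notin> E \<Longrightarrow> phi i j k = 0"
    and cons: "\<And>i. y i k + (\<Sum>j\<in>UNIV. phi i j k) = (if i \<in> S k then 0 else 1)"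
    and ynn: "\<And>i. 0 \<le> y i k"
  shows "mc_eq E S D' r phi y k m \<longleftrightarrow>
     (\<forall>i. m i = (\<Sum>j\<in>UNIV. phi i j k * D' j i (linkflow r phi j i)) + (\<Sum>j\<in>UNIV. phi i j k * m j))"
proof -
  have eq: "(if i \<in> S k \<or> y i k = 1 then 0
             else (\<Sum>j\<in>nbrs E i. phi i j k * (D' j i (linkflow r phi j i) + m j)))
        = (\<Sum>j\<in>UNIV. phi i j k * D' j i (linkflow r phi j i)) + (\<Sum>j\<in>UNIV. phi i j k * m j)" for i
  proof -
    have U: "(\<Sum>j\<in>UNIV. phi i j k * D' j i (linkflow r phi j i)) + (\<Sum>j\<in>UNIV. phi i j k * m j)
           = (\<Sum>j\<in>UNIV. phi i j k * (D' j i (linkflow r phi j i) + m j))"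
      by (simp add: distrib_left sum.distrib)
    show ?thesis
    proof (cases "i \<in> S k \<or> y i k = 1")
      case True
      hence "(\<Sum>j\<in>UNIV. phi i j k) \<le> 0" using cons[of i] ynn[of i] by (auto split: if_splits)
      hence "phi i j k = 0" for j using zero_row[of "\<lambda>j. phi i j k"] nn by blast
      thus ?thesis using True U by simp
    next
      case False
      have "(\<Sum>j\<in>nbrs E i. phi i j k * (D' j i (linkflow r phi j i) + m j))
          = (\<Sum>j\<in>UNIV. phi i j k * (D' j i (linkflow r phi j i) + m j))"
        by (rule sum.mono_neutral_left) (auto simp: nbrs_def off)
      thus ?thesis using False U by simp
    qed
  qed
  show ?thesis unfolding mc_eq_def eq ..
qed


lemma item_bound:
  fixes E :: "('v::finite \<times> 'v) set"
    and S :: "'c::finite \<Rightarrow> 'v set"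
    and r :: "'v \<Rightarrow> 'c \<Rightarrow> real"
    and D D' :: "'v \<Rightarrow> 'v \<Rightarrow> real \<Rightarrow> real"
    and B B' :: "'v \<Rightarrow> real \<Rightarrow> real"
    and phi phi' :: "'v \<Rightarrow> 'v \<Rightarrow> 'c \<Rightarrow> real"
    and y y' :: "'v \<Rightarrow> 'c \<Rightarrow> real"
  assumes D_cost: "\<And>i j. cost_fun (D i j) (D' i j)"
    and B_cost: "\<And>i. cost_fun (B i) (B' i)"
    and feas: "feasible E S r phi y"
    and mc: "MC E S D' B' r phi y"
    and feas': "feasible E S r phi' y'"
    and mono: "(\<forall>i j k. phi' i j k \<ge> phi i j k) \<or> (\<forall>i j k. phi' i j k \<le> phi i j k)"
  shows "0 \<le> (\<Sum>i\<in>UNIV. \<Sum>j\<in>UNIV. D' j i (linkflow r phi j i) *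
              (arrival r phi' i k * phi' i j k - arrival r phi i k * phi i j k))
           + (\<Sum>i\<in>UNIV. B' i (cacheload y i) * (y' i k - y i k))"
proof -
  note F = feas[unfolded feasible_def] and F' = feas'[unfolded feasible_def]
  have Pnn: "\<And>i j. 0 \<le> phi i j k" using F by blast
  have P'nn: "\<And>i j. 0 \<le> phi' i j k" using F' by blast
  have Poff0: "\<And>i j. (i, j) \<notin> E \<Longrightarrow> phi i j k = 0" using F by blast
  have P'off0: "\<And>i j. (i, j) \<notin> E \<Longrightarrow> phi' i j k = 0" using F' by blast
  have Poff: "\<And>i j. j \<notin> nbrs E i \<Longrightarrow> phi i j k = 0" using Poff0 by (simp add: nbrs_def)
  have P'off: "\<And>i j. j \<notin> nbrs E i \<Longrightarrow> phi' i j k = 0" using P'off0 by (simp add: nbrs_def)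
  have ynn: "\<And>i. 0 \<le> y i k" using F by blast
  have y'nn: "\<And>i. 0 \<le> y' i k" using F' by blast
  have cons: "\<And>i. y i k + (\<Sum>j\<in>UNIV. phi i j k) = (if i \<in> S k then 0 else 1)" using F by blast
  have cons': "\<And>i. y' i k + (\<Sum>j\<in>UNIV. phi' i j k) = (if i \<in> S k then 0 else 1)" using F' by blast
  have ue: "\<exists>!t. arr_eq r phi k t" using F by blast
  have ue': "\<exists>!t. arr_eq r phi' k t" using F' by blast
  have u: "\<exists>!x. \<forall>i. x i = r i k + (\<Sum>j\<in>UNIV. x j * phi j i k)" using ue unfolding arr_eq_def .
  have u': "\<exists>!x. \<forall>i. x i = r i k + (\<Sum>j\<in>UNIV. x j * phi' j i k)" using ue' unfolding arr_eq_def .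
  have tsol: "\<And>i. arrival r phi i k = r i k + (\<Sum>j\<in>UNIV. arrival r phi j k * phi j i k)"
    by (rule arrival_sol[OF ue])
  have t'sol: "\<And>i. arrival r phi' i k = r i k + (\<Sum>j\<in>UNIV. arrival r phi' j k * phi' j i k)"
    by (rule arrival_sol[OF ue'])
  have tall: "\<And>i k. 0 \<le> arrival r phi i k" using F by blast
  have tnn: "\<And>i. 0 \<le> arrival r phi i k" using F by blast
  have t'nn: "\<And>i. 0 \<le> arrival r phi' i k" using F' by blast
  have Pall: "\<And>i j k. 0 \<le> phi i j k" using F by blast
  have lf: "\<And>i j. 0 \<le> linkflow r phi i j"
    unfolding linkflow_def by (rule sum_nonneg) (simp add: tall Pall)
  define d where "d = (\<lambda>i j. D' j i (linkflow r phi j i))"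
  have dnn: "\<And>i j. 0 \<le> d i j" unfolding d_def by (rule cost_deriv_nonneg[OF D_cost lf])
  define M where "M = (\<lambda>j. marginal E S D' r phi y j k)"
  define c where "c = (\<lambda>i. \<Sum>j\<in>UNIV. phi i j k * d i j)"
  have iff: "mc_eq E S D' r phi y k m \<longleftrightarrow> (\<forall>i. m i = c i + (\<Sum>j\<in>UNIV. phi i j k * m j))" for m
    unfolding c_def d_def by (rule mc_eq_iff[where phi=phi and k=k and E=E and y=y and S=S, OF Pnn Poff0 cons ynn])
  have ex: "\<exists>!m. \<forall>i. m i = c i + (\<Sum>j\<in>UNIV. phi i j k * m j)"
    by (rule lin_unique(2)[OF u])
  hence "\<exists>!m. mc_eq E S D' r phi y k m" unfolding iff .
  hence "mc_eq E S D' r phi y k (THE m. mc_eq E S D' r phi y k m)" by (rule theI')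
  hence "\<forall>i. (THE m. mc_eq E S D' r phi y k m) i = c i + (\<Sum>j\<in>UNIV. phi i j k * (THE m. mc_eq E S D' r phi y k m) j)"
    unfolding iff .
  hence Mc: "\<And>i. M i = c i + (\<Sum>j\<in>UNIV. phi i j k * M j)"
    unfolding M_def marginal_def by (rule spec)
  have Msol: "\<And>i. M i = (\<Sum>j\<in>UNIV. phi i j k * (d i j + M j))"
  proof -
    fix i
    have "(\<Sum>j\<in>UNIV. phi i j k * (d i j + M j)) = c i + (\<Sum>j\<in>UNIV. phi i j k * M j)"
      unfolding c_def by (simp add: distrib_left sum.distrib)
    thus "M i = (\<Sum>j\<in>UNIV. phi i j k * (d i j + M j))" using Mc[of i] by linarith
  qed
  have row: "\<And>j. (\<Sum>i\<in>UNIV. phi j i k) \<le> 1"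
  proof -
    fix j show "(\<Sum>i\<in>UNIV. phi j i k) \<le> 1" using cons[of j] ynn[of j] by (auto split: if_splits)
  qed
  have Mnn: "\<And>i. 0 \<le> M i"
    by (rule nonneg_dual[of "\<lambda>i j. phi i j k", OF Pnn row u Mc]) (simp add: c_def sum_nonneg Pnn dnn)
  define \<delta> where "\<delta> = (\<lambda>i. delta E S D' B' r phi y i k)"
  have \<delta>eq: "\<delta> i = min (if arrival r phi i k = 0 then \<infinity> else ereal (B' i (cacheload y i) / arrival r phi i k))
         (INF j\<in>nbrs E i. ereal (d i j + M j))" for i
    unfolding \<delta>_def delta_def d_def M_def ..
  have \<delta>le: "\<And>i j. j \<in> nbrs E i \<Longrightarrow> \<delta> i \<le> ereal (d i j + M j)"
  proof -
    fix i j assume "j \<in> nbrs E i"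
    hence "(INF j\<in>nbrs E i. ereal (d i j + M j)) \<le> ereal (d i j + M j)" by (rule INF_lower)
    thus "\<delta> i \<le> ereal (d i j + M j)" unfolding \<delta>eq by (rule min.coboundedI2)
  qed
  have Yn: "\<And>i. 0 \<le> cacheload y i" unfolding cacheload_def using F by (simp add: sum_nonneg)
  have \<delta>nn: "\<And>i. 0 \<le> \<delta> i"
  proof -
    fix i
    have "0 \<le> B' i (cacheload y i)" by (rule cost_deriv_nonneg[OF B_cost Yn])
    hence a: "0 \<le> (if arrival r phi i k = 0 then \<infinity> else ereal (B' i (cacheload y i) / arrival r phi i k))"
      using tnn[of i] by simp
    have b: "0 \<le> (INF j\<in>nbrs E i. ereal (d i j + M j))"
      by (rule INF_greatest) (simp add: dnn Mnn)
    show "0 \<le> \<delta> i" unfolding \<delta>eq using a b by simp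
  qed
  have MC': "\<forall>i k.
        (y i k > 0 \<longrightarrow> ereal (B' i (cacheload y i)) = ereal (arrival r phi i k) * delta E S D' B' r phi y i k) \<and>
        (y i k = 0 \<longrightarrow> ereal (B' i (cacheload y i)) \<ge> ereal (arrival r phi i k) * delta E S D' B' r phi y i k) \<and>
        (\<forall>j\<in>nbrs E i.
           (phi i j k > 0 \<longrightarrow> ereal (D' j i (linkflow r phi j i) + marginal E S D' r phi y j k) = delta E S D' B' r phi y i k) \<and>
           (phi i j k = 0 \<longrightarrow> ereal (D' j i (linkflow r phi j i) + marginal E S D' r phi y j k) \<ge> delta E S D' B' r phi y i k))"
    using mc unfolding MC_def .
  have mcP: "\<And>i j. j \<in> nbrs E i \<Longrightarrow> phi i j k > 0 \<Longrightarrow> ereal (d i j + M j) = \<delta> i"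
    unfolding d_def M_def \<delta>_def using MC' by blast
  have mcy1: "\<And>i. y i k > 0 \<Longrightarrow> ereal (B' i (cacheload y i)) = ereal (arrival r phi i k) * \<delta> i"
    unfolding \<delta>_def using MC' by blast
  have mcy0: "\<And>i. y i k = 0 \<Longrightarrow> ereal (B' i (cacheload y i)) \<ge> ereal (arrival r phi i k) * \<delta> i"
    unfolding \<delta>_def using MC' by blast
  have mono': "(\<forall>i j. phi' i j k \<ge> phi i j k) \<or> (\<forall>i j. phi' i j k \<le> phi i j k)" using mono by blast
  have "0 \<le> (\<Sum>i\<in>UNIV. \<Sum>j\<in>UNIV. d i j * (arrival r phi' i k * phi' i j k - arrival r phi i k * phi i j k))
           + (\<Sum>i\<in>UNIV. B' i (cacheload y i) * (y' i k - y i k))"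
    by (rule perk[where P="\<lambda>i j. phi i j k" and P'="\<lambda>i j. phi' i j k" and d=d
          and t="\<lambda>i. arrival r phi i k" and t'="\<lambda>i. arrival r phi' i k" and r="\<lambda>i. r i k"
          and y="\<lambda>i. y i k" and y'="\<lambda>i. y' i k" and b="\<lambda>i. B' i (cacheload y i)" and M=M
          and v="\<lambda>i. if i \<in> S k then 0 else 1" and N="nbrs E" and \<delta>=\<delta>,
          OF Pnn P'nn Poff P'off cons cons' tsol t'sol tnn t'nn u u' Msol \<delta>le \<delta>nn mcP mcy1 mcy0 ynn y'nn mono'])
       (auto split: if_splits)
  thus ?thesis unfolding d_def .
qed

theorem corollary3:
  fixes E :: "('v::finite \<times> 'v) set"
    and S :: "'c::finite \<Rightarrow> 'v set"
    and r :: "'v \<Rightarrow> 'c \<Rightarrow> real"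
    and D D' :: "'v \<Rightarrow> 'v \<Rightarrow> real \<Rightarrow> real"
    and B B' :: "'v \<Rightarrow> real \<Rightarrow> real"
    and phi phi' :: "'v \<Rightarrow> 'v \<Rightarrow> 'c \<Rightarrow> real"
    and y y' :: "'v \<Rightarrow> 'c \<Rightarrow> real"
  assumes sym: "\<And>i j. (i, j) \<in> E \<Longrightarrow> (j, i) \<in> E"
    and servers: "\<And>k. S k \<noteq> {}"
    and r_nonneg: "\<And>i k. 0 \<le> r i k"
    and D_cost: "\<And>i j. cost_fun (D i j) (D' i j)"
    and B_cost: "\<And>i. cost_fun (B i) (B' i)"
    and feas: "feasible E S r phi y"
    and mc: "MC E S D' B' r phi y"
    and feas': "feasible E S r phi' y'"
    and mono: "(\<forall>i j k. phi' i j k \<ge> phi i j k) \<or> (\<forall>i j k. phi' i j k \<le> phi i j k)"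
  shows "total_cost E D B r phi y \<le> total_cost E D B r phi' y'"
  proof -
  note F = feas[unfolded feasible_def] and F' = feas'[unfolded feasible_def]
  have tall: "\<And>i k. 0 \<le> arrival r phi i k" using F by blast
  have t'all: "\<And>i k. 0 \<le> arrival r phi' i k" using F' by blast
  have Pall: "\<And>i j k. 0 \<le> phi i j k" using F by blast
  have P'all: "\<And>i j k. 0 \<le> phi' i j k" using F' by blast
  have Poff: "\<And>i j k. (i, j) \<notin> E \<Longrightarrow> phi i j k = 0" using F by blast
  have P'off: "\<And>i j k. (i, j) \<notin> E \<Longrightarrow> phi' i j k = 0" using F' by blast
  have lf: "\<And>i j. 0 \<le> linkflow r phi i j"
    unfolding linkflow_def by (rule sum_nonneg) (simp add: tall Pall)
  have lf': "\<And>i j. 0 \<le> linkflow r phi' i j"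
    unfolding linkflow_def by (rule sum_nonneg) (simp add: t'all P'all)
  have Yn: "\<And>i. 0 \<le> cacheload y i" unfolding cacheload_def using F by (simp add: sum_nonneg)
  have Yn': "\<And>i. 0 \<le> cacheload y' i" unfolding cacheload_def using F' by (simp add: sum_nonneg)
  define g where "g = (\<lambda>i j. D' i j (linkflow r phi i j) * (linkflow r phi' i j - linkflow r phi i j))"
  define h where "h = (\<lambda>i. B' i (cacheload y i) * (cacheload y' i - cacheload y i))"
  have s1: "(\<Sum>(i, j)\<in>E. D i j (linkflow r phi' i j)) - (\<Sum>(i, j)\<in>E. D i j (linkflow r phi i j))
      \<ge> (\<Sum>(i, j)\<in>E. g i j)"
  proof -
    have "(\<Sum>(i, j)\<in>E. g i j) \<le> (\<Sum>(i, j)\<in>E. D i j (linkflow r phi' i j) - D i j (linkflow r phi i j))"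
      by (rule sum_mono) (auto simp: g_def intro!: cost_tangent[OF D_cost lf' lf])
    also have "\<dots> = (\<Sum>(i, j)\<in>E. D i j (linkflow r phi' i j)) - (\<Sum>(i, j)\<in>E. D i j (linkflow r phi i j))"
      by (simp add: case_prod_beta sum_subtractf)
    finally show ?thesis .
  qed
  have s2: "(\<Sum>i\<in>UNIV. B i (cacheload y' i)) - (\<Sum>i\<in>UNIV. B i (cacheload y i)) \<ge> (\<Sum>i\<in>UNIV. h i)"
  proof -
    have "(\<Sum>i\<in>UNIV. h i) \<le> (\<Sum>i\<in>UNIV. B i (cacheload y' i) - B i (cacheload y i))"
      by (rule sum_mono) (auto simp: h_def intro!: cost_tangent[OF B_cost Yn' Yn])
    also have "\<dots> = (\<Sum>i\<in>UNIV. B i (cacheload y' i)) - (\<Sum>i\<in>UNIV. B i (cacheload y i))"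
      by (simp add: sum_subtractf)
    finally show ?thesis .
  qed
  define G1 where "G1 = (\<lambda>k. \<Sum>i\<in>UNIV. \<Sum>j\<in>UNIV. D' j i (linkflow r phi j i) *
              (arrival r phi' i k * phi' i j k - arrival r phi i k * phi i j k))"
  define G2 where "G2 = (\<lambda>k. \<Sum>i\<in>UNIV. B' i (cacheload y i) * (y' i k - y i k))"
  have gE: "(\<Sum>(i, j)\<in>E. g i j) = (\<Sum>p\<in>UNIV. case p of (i, j) \<Rightarrow> g i j)"
  proof (rule sum.mono_neutral_left)
    show "\<forall>p\<in>UNIV - E. (case p of (i, j) \<Rightarrow> g i j) = 0"
    proof
      fix p assume "p \<in> UNIV - E"
      then obtain i j where p: "p = (i, j)" and nE: "(i, j) \<notin> E" by (cases p) auto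
      hence "(j, i) \<notin> E" using sym by blast
      hence "linkflow r phi' i j - linkflow r phi i j = 0"
        unfolding linkflow_def using Poff P'off by simp
      thus "(case p of (i, j) \<Rightarrow> g i j) = 0" unfolding p g_def by simp
    qed
  qed auto
  also have "\<dots> = (\<Sum>i\<in>UNIV. \<Sum>j\<in>UNIV. g i j)"
    using sum.cartesian_product[of "\<lambda>i j. g i j" UNIV UNIV] by (simp only: UNIV_Times_UNIV)
  also have "\<dots> = (\<Sum>i\<in>UNIV. \<Sum>j\<in>UNIV. g j i)" by (rule sum.swap)
  also have "\<dots> = (\<Sum>i\<in>UNIV. \<Sum>j\<in>UNIV. \<Sum>k\<in>UNIV. D' j i (linkflow r phi j i) *
              (arrival r phi' i k * phi' i j k - arrival r phi i k * phi i j k))"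
  proof (rule sum.cong[OF refl], rule sum.cong[OF refl])
    fix i j
    have "linkflow r phi' j i - linkflow r phi j i
        = (\<Sum>k\<in>UNIV. arrival r phi' i k * phi' i j k - arrival r phi i k * phi i j k)"
      unfolding linkflow_def by (simp add: sum_subtractf)
    thus "g j i = (\<Sum>k\<in>UNIV. D' j i (linkflow r phi j i) *
              (arrival r phi' i k * phi' i j k - arrival r phi i k * phi i j k))"
      unfolding g_def by (simp add: sum_distrib_left)
  qed
  also have "\<dots> = (\<Sum>i\<in>UNIV. \<Sum>k\<in>UNIV. \<Sum>j\<in>UNIV. D' j i (linkflow r phi j i) *
              (arrival r phi' i k * phi' i j k - arrival r phi i k * phi i j k))"
    by (rule sum.cong[OF refl], rule sum.swap)
  also have "\<dots> = (\<Sum>k\<in>UNIV. G1 k)"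
    unfolding G1_def by (rule sum.swap)
  finally have gG: "(\<Sum>(i, j)\<in>E. g i j) = (\<Sum>k\<in>UNIV. G1 k)" .
  have "(\<Sum>i\<in>UNIV. h i) = (\<Sum>i\<in>UNIV. \<Sum>k\<in>UNIV. B' i (cacheload y i) * (y' i k - y i k))"
  proof (rule sum.cong[OF refl])
    fix i
    have "cacheload y' i - cacheload y i = (\<Sum>k\<in>UNIV. y' i k - y i k)"
      unfolding cacheload_def by (simp add: sum_subtractf)
    thus "h i = (\<Sum>k\<in>UNIV. B' i (cacheload y i) * (y' i k - y i k))"
      unfolding h_def by (simp add: sum_distrib_left)
  qed
  also have "\<dots> = (\<Sum>k\<in>UNIV. G2 k)" unfolding G2_def by (rule sum.swap)
  finally have hG: "(\<Sum>i\<in>UNIV. h i) = (\<Sum>k\<in>UNIV. G2 k)" .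
  have "0 \<le> (\<Sum>k\<in>UNIV. G1 k + G2 k)"
    by (rule sum_nonneg) (unfold G1_def G2_def, rule item_bound[OF D_cost B_cost feas mc feas' mono])
  hence "0 \<le> (\<Sum>(i, j)\<in>E. g i j) + (\<Sum>i\<in>UNIV. h i)" unfolding gG hG by (simp add: sum.distrib)
  thus ?thesis unfolding total_cost_def using s1 s2 by linarith
qed


end
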